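(* Let $V$ be a finite set of vertices, let $(V,E)$ be the complete undirected graph on $V$, and let $w:E\to\mathbb{R}$ be arbitrary edge weights (write $w_{ij}=w_{ji}=w(\{i,j\})$). Consider the two $0$--$1$ integer linear programs $$\text{(P)}:\quad \max \sum_{\{i,j\}\in E} w_{ij}x_{ij}\ \text{ s.t. } x_{ij}+x_{jk}\le 1+x_{ik}\ \text{for all distinct } i,j,k\in V,\quad x_{ij}\in\{0,1\}\ \text{for all distinct } i,j\in V,$$ $$\text{(FRP)}:\quad \max \sum_{\{i,j\}\in E} w_{ij}x_{ij}\ \text{ s.t. } x_{ij}+x_{jk}\le 1+x_{ik}\ \text{for all distinct } i,j,k\in V \text{ with } w_{ij}+w_{jk}\ge 0,\quad x_{ij}\in\{0,1\}\ \text{for all distinct } i,j\in V.$$ Then the set of optimal solutions of (FRP) coincides with the set of optimal solutions of (P).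
   Context: Variables are indexed by unordered pairs of distinct vertices, i.e. $x_{ij}$ and $x_{ji}$ denote the same variable, one for each edge $\{i,j\}\in E$. The constraints $x_{ij}+x_{jk}\le 1+x_{ik}$ (transitivity constraints) are imposed for every ordered triple of distinct vertices satisfying the stated condition. Problem (P) is the standard formulation of the clique partitioning problem, whose feasible solutions are exactly the incidence vectors of edge sets of vertex partitions of $V$ into cliques. *)

theory Defs
  imports Complex_Main "HOL-Library.FuncSet"
begin

definition edges :: "'a set \<Rightarrow> 'a set set" where
  "edges V = {{i, j} | i j. i \<in> V \<and> j \<in> V \<and> i \<noteq> j}"

(* A candidate solution is a vector indexed by E, i.e. a function on E that is
   (by convention) 0 outside E; x_{ij} is written  x {i,j}. *)
definition binary_vec :: "'a set \<Rightarrow> ('a set \<Rightarrow> real) \<Rightarrow> bool" where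
  "binary_vec V x \<longleftrightarrow> x \<in> extensional (edges V) \<and> (\<forall>e \<in> edges V. x e \<in> {0, 1})"

definition objective :: "'a set \<Rightarrow> ('a set \<Rightarrow> real) \<Rightarrow> ('a set \<Rightarrow> real) \<Rightarrow> real" where
  "objective V w x = (\<Sum>e \<in> edges V. w e * x e)"

definition feasible_P :: "'a set \<Rightarrow> ('a set \<Rightarrow> real) \<Rightarrow> bool" where
  "feasible_P V x \<longleftrightarrow> binary_vec V x \<and>
     (\<forall>i\<in>V. \<forall>j\<in>V. \<forall>k\<in>V. i \<noteq> j \<and> j \<noteq> k \<and> i \<noteq> k \<longrightarrow>
        x {i, j} + x {j, k} \<le> 1 + x {i, k})"

definition feasible_FRP :: "'a set \<Rightarrow> ('a set \<Rightarrow> real) \<Rightarrow> ('a set \<Rightarrow> real) \<Rightarrow> bool" where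
  "feasible_FRP V w x \<longleftrightarrow> binary_vec V x \<and>
     (\<forall>i\<in>V. \<forall>j\<in>V. \<forall>k\<in>V. i \<noteq> j \<and> j \<noteq> k \<and> i \<noteq> k \<and> w {i, j} + w {j, k} \<ge> 0 \<longrightarrow>
        x {i, j} + x {j, k} \<le> 1 + x {i, k})"

definition optimal_solutions :: "(('a set \<Rightarrow> real) \<Rightarrow> bool) \<Rightarrow> (('a set \<Rightarrow> real) \<Rightarrow> real)
    \<Rightarrow> ('a set \<Rightarrow> real) set" where
  "optimal_solutions F f = {x. F x \<and> (\<forall>y. F y \<longrightarrow> f y \<le> f x)}"

end

theory Submission
  imports Defs
begin

lemma edge_iff: "{i, j} \<in> edges V \<longleftrightarrow> i \<in> V \<and> j \<in> V \<and> i \<noteq> j"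
  unfolding edges_def by (auto simp: doubleton_eq_iff)

lemma edge_obtain:
  assumes "e \<in> edges V"
  obtains i j where "e = {i, j}" "i \<in> V" "j \<in> V" "i \<noteq> j"
  using assms unfolding edges_def by blast

lemma finite_edges: "finite V \<Longrightarrow> finite (edges V)"
  by (rule finite_subset[of _ "Pow V"]) (auto simp: edges_def)

lemma P_imp_FRP: "feasible_P V x \<Longrightarrow> feasible_FRP V w x"
  unfolding feasible_P_def feasible_FRP_def by blast

lemma improve:
  assumes fin: "finite V" and F: "feasible_FRP V w x" and nP: "\<not> feasible_P V x"
  shows "\<exists>y. feasible_FRP V w y \<and> objective V w x < objective V w y
           \<and> card {e\<in>edges V. y e = 1} < card {e\<in>edges V. x e = 1}"
proof -
  have bin: "binary_vec V x" using F by (simp add: feasible_FRP_def)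
  have xb: "x {i, j} = 0 \<or> x {i, j} = 1" if "i \<in> V" "j \<in> V" "i \<noteq> j" for i j
    using bin that by (auto simp: binary_vec_def edge_iff)
  have xcon: "x {i, j} + x {j, k} \<le> 1 + x {i, k}"
    if "i \<in> V" "j \<in> V" "k \<in> V" "i \<noteq> j" "j \<noteq> k" "i \<noteq> k" "w {i, j} + w {j, k} \<ge> 0" for i j k
    using F that unfolding feasible_FRP_def by blast
  define T where "T = {(v, u, t). v \<in> V \<and> u \<in> V \<and> t \<in> V \<and> v \<noteq> u \<and> u \<noteq> t \<and> v \<noteq> t
                     \<and> x {v, u} = 1 \<and> x {u, t} = 1 \<and> x {v, t} \<noteq> 1}"
  have finT: "finite T"
    by (rule finite_subset[of _ "V \<times> V \<times> V"]) (auto simp: T_def fin)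
  have Tne: "T \<noteq> {}"
  proof -
    from nP bin obtain i j k where ijk: "i \<in> V" "j \<in> V" "k \<in> V" "i \<noteq> j" "j \<noteq> k" "i \<noteq> k"
      and viol: "\<not> x {i, j} + x {j, k} \<le> 1 + x {i, k}"
      unfolding feasible_P_def by blast
    have "x {i, j} = 1" "x {j, k} = 1" "x {i, k} \<noteq> 1"
      using viol xb[of i j] xb[of j k] xb[of i k] ijk by auto
    then have "(i, j, k) \<in> T" using ijk by (simp add: T_def)
    then show ?thesis by blast
  qed
  have neg: "w {v, u} + w {u, t} < 0" if "(v, u, t) \<in> T" for v u t
  proof (rule ccontr)
    assume "\<not> w {v, u} + w {u, t} < 0"
    then have "x {v, u} + x {u, t} \<le> 1 + x {v, t}"
      using that by (intro xcon) (auto simp: T_def)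
    moreover have "x {v, t} = 0" using that xb[of v t] by (auto simp: T_def)
    ultimately show False using that by (simp add: T_def)
  qed
  have swap: "(\<Sum>(v, u, t)\<in>T. w {v, u}) = (\<Sum>(v, u, t)\<in>T. w {u, t})"
  proof (rule sum.reindex_bij_witness[where i = "\<lambda>(v, u, t). (t, u, v)" and j = "\<lambda>(v, u, t). (t, u, v)"])
    fix a assume "a \<in> T"
    then show "(case (case a of (v, u, t) \<Rightarrow> (t, u, v)) of (v, u, t) \<Rightarrow> (t, u, v)) = a"
      by (cases a) auto
  next
    fix a assume "a \<in> T"
    then show "(case a of (v, u, t) \<Rightarrow> (t, u, v)) \<in> T"
      by (cases a) (auto simp: T_def insert_commute)
  next
    fix a assume "a \<in> T"
    then show "(case (case a of (v, u, t) \<Rightarrow> (t, u, v)) of (v, u, t) \<Rightarrow> (t, u, v)) = a"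
      by (cases a) auto
  next
    fix a assume "a \<in> T"
    then show "(case a of (v, u, t) \<Rightarrow> (t, u, v)) \<in> T"
      by (cases a) (auto simp: T_def insert_commute)
  next
    fix a assume "a \<in> T"
    then show "(case case a of (v, u, t) \<Rightarrow> (t, u, v) of (v, u, t) \<Rightarrow> w {u, t}) = (case a of (v, u, t) \<Rightarrow> w {v, u})"
      by (cases a) (auto simp: insert_commute)
  qed
  have "(\<Sum>(v, u, t)\<in>T. w {v, u} + w {u, t}) < (\<Sum>(v, u, t)\<in>T. 0)"
    using finT Tne by (rule sum_strict_mono) (use neg in auto)
  then have "(\<Sum>(v, u, t)\<in>T. w {v, u}) + (\<Sum>(v, u, t)\<in>T. w {u, t}) < 0"
    by (simp add: sum.distrib[symmetric] case_prod_unfold)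
  then have sumneg: "(\<Sum>(v, u, t)\<in>T. w {u, t}) < 0" using swap by simp
  define Tv where "Tv = (\<lambda>v. {(u, t). (v, u, t) \<in> T})"
  have TS: "T = (SIGMA v:V. Tv v)" by (auto simp: T_def Tv_def)
  have finTv: "finite (Tv v)" for v
    by (rule finite_subset[of _ "V \<times> V"]) (auto simp: T_def Tv_def fin)
  have "(\<Sum>v\<in>V. \<Sum>(u, t)\<in>Tv v. w {u, t}) = (\<Sum>(v, u, t)\<in>T. w {u, t})"
    unfolding TS by (rule sum.Sigma) (use fin finTv in auto)
  with sumneg have "(\<Sum>v\<in>V. \<Sum>(u, t)\<in>Tv v. w {u, t}) < 0" by simp
  then obtain v where vV: "v \<in> V" and vneg: "(\<Sum>(u, t)\<in>Tv v. w {u, t}) < 0"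
    by (meson not_less sum_nonneg)
  define S where "S = {u \<in> V. u = v \<or> x {v, u} = 1}"
  define y where "y = (\<lambda>e. if e \<in> edges V \<and> e \<inter> S \<noteq> {} \<and> \<not> e \<subseteq> S then 0 else x e)"
  define C where "C = {e \<in> edges V. e \<inter> S \<noteq> {} \<and> \<not> e \<subseteq> S \<and> x e = 1}"
  have TvS: "Tv v = {(u, t). u \<in> S \<and> t \<in> V - S \<and> x {u, t} = 1}"
  proof (intro set_eqI iffI)
    fix p assume "p \<in> Tv v"
    then show "p \<in> {(u, t). u \<in> S \<and> t \<in> V - S \<and> x {u, t} = 1}"
      by (cases p) (auto simp: Tv_def T_def S_def)
  next
    fix p assume p: "p \<in> {(u, t). u \<in> S \<and> t \<in> V - S \<and> x {u, t} = 1}"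
    obtain u t where put: "p = (u, t)" by (cases p)
    have uS: "u \<in> S" and tV: "t \<in> V" and tS: "t \<notin> S" and xut: "x {u, t} = 1"
      using p put by auto
    have tv: "t \<noteq> v" "x {v, t} \<noteq> 1" using tS tV by (auto simp: S_def)
    have uv: "u \<noteq> v" using tv xut by auto
    have "x {v, u} = 1" "u \<in> V" using uS uv by (auto simp: S_def)
    moreover have "u \<noteq> t" using uS tS by auto
    ultimately show "p \<in> Tv v" using put tv tV xut vV uv by (auto simp: Tv_def T_def)
  qed
  have inj: "inj_on (\<lambda>(u, t). {u, t}) (Tv v)"
  proof (rule inj_onI)
    fix p q assume p: "p \<in> Tv v" and q: "q \<in> Tv v" and eq: "(case p of (u, t) \<Rightarrow> {u, t}) = (case q of (u, t) \<Rightarrow> {u, t})"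
    obtain u t u' t' where pq: "p = (u, t)" "q = (u', t')" by (cases p, cases q)
    have "u \<in> S" "t \<notin> S" "u' \<in> S" "t' \<notin> S" using p q pq TvS by auto
    then show "p = q" using eq pq by (auto simp: doubleton_eq_iff)
  qed
  have img: "C = (\<lambda>(u, t). {u, t}) ` Tv v"
  proof (intro set_eqI iffI)
    fix e assume e: "e \<in> C"
    then have "e \<in> edges V" by (simp add: C_def)
    then obtain i j where ij: "e = {i, j}" "i \<in> V" "j \<in> V" "i \<noteq> j"
      by (rule edge_obtain)
    have cr: "e \<inter> S \<noteq> {}" "\<not> e \<subseteq> S" "x e = 1" using e by (auto simp: C_def)
    show "e \<in> (\<lambda>(u, t). {u, t}) ` Tv v"
    proof (cases "i \<in> S")
      case True
      then have "j \<notin> S" using cr ij by auto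
      then have "(i, j) \<in> Tv v" using True ij cr TvS by auto
      then show ?thesis using ij by force
    next
      case False
      then have "j \<in> S" using cr ij by auto
      then have "(j, i) \<in> Tv v" using False ij cr TvS by (auto simp: insert_commute)
      then show ?thesis using ij by (force simp: insert_commute)
    qed
  next
    fix e assume "e \<in> (\<lambda>(u, t). {u, t}) ` Tv v"
    then obtain u t where ut: "(u, t) \<in> Tv v" "e = {u, t}" by auto
    then have "u \<in> S" "t \<in> V" "t \<notin> S" "x {u, t} = 1" using TvS by auto
    moreover have "u \<in> V" using \<open>u \<in> S\<close> by (simp add: S_def)
    moreover have "u \<noteq> t" using \<open>u \<in> S\<close> \<open>t \<notin> S\<close> by auto
    ultimately show "e \<in> C" using ut by (auto simp: C_def edge_iff)
  qed
  have sumC: "sum w C = (\<Sum>(u, t)\<in>Tv v. w {u, t})"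
    unfolding img by (subst sum.reindex[OF inj]) (simp add: case_prod_unfold comp_def)
  have CE: "C \<subseteq> edges V" by (auto simp: C_def)
  have xsplit: "w e * x e = w e * y e + (if e \<in> C then w e else 0)" if "e \<in> edges V" for e
  proof -
    have "x e = 0 \<or> x e = 1" using bin that by (auto simp: binary_vec_def)
    then show ?thesis using that by (auto simp: y_def C_def)
  qed
  have "objective V w x = (\<Sum>e\<in>edges V. w e * y e + (if e \<in> C then w e else 0))"
    unfolding objective_def by (rule sum.cong) (auto simp: xsplit)
  also have "\<dots> = objective V w y + (\<Sum>e\<in>edges V. if e \<in> C then w e else 0)"
    by (simp add: sum.distrib objective_def)
  also have "(\<Sum>e\<in>edges V. if e \<in> C then w e else 0) = sum w (edges V \<inter> C)"
    by (rule sum.inter_restrict[symmetric]) (rule finite_edges[OF fin])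
  also have "edges V \<inter> C = C" using CE by blast
  finally have objeq: "objective V w x = objective V w y + sum w C" .
  have obj: "objective V w x < objective V w y"
    using objeq sumC vneg by simp
  have Cne: "C \<noteq> {}"
  proof
    assume "C = {}"
    then have "Tv v = {}" using img by auto
    then show False using vneg by simp
  qed
  have card: "card {e\<in>edges V. y e = 1} < card {e\<in>edges V. x e = 1}"
  proof (rule psubset_card_mono)
    show "finite {e\<in>edges V. x e = 1}" using finite_edges[OF fin] by simp
    have sub: "{e\<in>edges V. y e = 1} \<subseteq> {e\<in>edges V. x e = 1}"
      by (auto simp: y_def split: if_splits)
    obtain e where "e \<in> C" using Cne by blast
    then have "e \<in> {e\<in>edges V. x e = 1}" "e \<notin> {e\<in>edges V. y e = 1}"
      by (auto simp: C_def y_def)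
    then show "{e\<in>edges V. y e = 1} \<subset> {e\<in>edges V. x e = 1}" using sub by blast
  qed
  have ybin: "binary_vec V y"
    using bin unfolding binary_vec_def y_def extensional_def by auto
  have ycon: "y {i, j} + y {j, k} \<le> 1 + y {i, k}"
    if "i \<in> V" "j \<in> V" "k \<in> V" "i \<noteq> j" "j \<noteq> k" "i \<noteq> k" "x {i, j} + x {j, k} \<le> 1 + x {i, k}" for i j k
  proof -
    have e: "{i, j} \<in> edges V" "{j, k} \<in> edges V" "{i, k} \<in> edges V" using that by (auto simp: edge_iff)
    have b: "x {i, j} = 0 \<or> x {i, j} = 1" "x {j, k} = 0 \<or> x {j, k} = 1" "x {i, k} = 0 \<or> x {i, k} = 1"
      using xb that by auto
    show ?thesis using e b that(7) unfolding y_def by (auto split: if_splits)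
  qed
  have "feasible_FRP V w y"
    unfolding feasible_FRP_def using ybin ycon xcon by blast
  then show ?thesis using obj card by blast
qed

lemma dominate:
  "finite V \<Longrightarrow> feasible_FRP V w x \<Longrightarrow> \<exists>z. feasible_P V z \<and> objective V w x \<le> objective V w z"
proof (induction "card {e\<in>edges V. x e = 1}" arbitrary: x rule: less_induct)
  case less
  show ?case
  proof (cases "feasible_P V x")
    case True
    then show ?thesis by blast
  next
    case False
    obtain y where y: "feasible_FRP V w y" "objective V w x < objective V w y"
      "card {e\<in>edges V. y e = 1} < card {e\<in>edges V. x e = 1}"
      using improve[OF less.prems(1) less.prems(2) False] by blast
    obtain z where "feasible_P V z" "objective V w y \<le> objective V w z"
      using less.hyps[OF y(3) less.prems(1) y(1)] by blast
    then show ?thesis using y(2) by (meson less_imp_le order.trans)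
  qed
qed

theorem theorem1:
  fixes V :: "'a set" and w :: "'a set \<Rightarrow> real"
  assumes "finite V"
  shows "optimal_solutions (feasible_FRP V w) (objective V w)
       = optimal_solutions (feasible_P V) (objective V w)"
proof
  show "optimal_solutions (feasible_FRP V w) (objective V w) \<subseteq> optimal_solutions (feasible_P V) (objective V w)"
  proof
    fix x assume "x \<in> optimal_solutions (feasible_FRP V w) (objective V w)"
    then have Fx: "feasible_FRP V w x"
      and opt: "\<forall>y. feasible_FRP V w y \<longrightarrow> objective V w y \<le> objective V w x"
      by (auto simp: optimal_solutions_def)
    have Px: "feasible_P V x"
    proof (rule ccontr)
      assume "\<not> feasible_P V x"
      from improve[OF assms Fx this] obtain y where "feasible_FRP V w y" "objective V w x < objective V w y"
        by blast
      with opt show False by force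
    qed
    show "x \<in> optimal_solutions (feasible_P V) (objective V w)"
      using Px opt P_imp_FRP unfolding optimal_solutions_def by blast
  qed
next
  show "optimal_solutions (feasible_P V) (objective V w) \<subseteq> optimal_solutions (feasible_FRP V w) (objective V w)"
  proof
    fix x assume "x \<in> optimal_solutions (feasible_P V) (objective V w)"
    then have Px: "feasible_P V x"
      and opt: "\<forall>y. feasible_P V y \<longrightarrow> objective V w y \<le> objective V w x"
      by (auto simp: optimal_solutions_def)
    have "objective V w y \<le> objective V w x" if Fy: "feasible_FRP V w y" for y
    proof -
      obtain z where "feasible_P V z" "objective V w y \<le> objective V w z"
        using dominate[OF assms Fy] by blast
      then show ?thesis using opt by force
    qed
    then show "x \<in> optimal_solutions (feasible_FRP V w) (objective V w)"
      using Px P_imp_FRP unfolding optimal_solutions_def by blast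
  qed
qed

end
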